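(* Let $\varphi(x)=\sum_{i\ge0}\gamma_ix^i\in\mathbb{K}[[x]]$ and let $k\ge1$ be an integer. Then $$\sum_{i=0}^m(-1)^i\binom{2m+2k-1}{m-i}\binom{m+i}{i}\gamma_{m+i-1}=0\quad\text{for each } m\ge1$$ if and only if $\varphi\in\mathcal{F}_{2k+1}$.
   Context: $\mathbb{K}\in\{\mathbb{Q},\mathbb{R},\mathbb{C}\}$. For $r\in\mathbb{Z}$, $\mathcal{F}_r$ denotes the space of $\varphi\in\mathbb{K}[[x]]$ with $\varphi(x/(x-1))=(1-x)^r\varphi(x)$. *)

theory Defs
  imports "HOL-Computational_Algebra.Formal_Power_Series"
begin

text \<open>The series x/(x-1), written as X * (X - 1)^(-1) (zero constant term, so composition is defined).\<close>
definition fps_xdiv :: "'a::field fps" where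
  "fps_xdiv = fps_X * inverse (fps_X - 1)"

definition one_minus_X_powi :: "int \<Rightarrow> 'a::field fps" where
  "one_minus_X_powi r =
     (if r \<ge> 0 then (1 - fps_X) ^ nat r else inverse ((1 - fps_X) ^ nat (- r)))"

definition fps_F :: "int \<Rightarrow> 'a::field fps set" where
  "fps_F r = {\<phi>. fps_compose \<phi> fps_xdiv = one_minus_X_powi r * \<phi>}"

end

theory Submission
  imports Defs
begin
unbundle fps_syntax



lemma I_nth: "(inverse (1 - fps_X) :: 'a::field fps) $ n = 1"
  by (simp add: fps_inverse_one_minus_fps_X)

lemma I_pow_nth:
  "((inverse (1 - fps_X) :: 'a::field fps) ^ Suc a) $ p = of_nat ((a + p) choose p)"
proof (induction a arbitrary: p)
  case 0
  then show ?case by (simp add: I_nth)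
next
  case (Suc a)
  have "((inverse (1 - fps_X) :: 'a fps) ^ Suc (Suc a)) $ p
      = (\<Sum>i=0..p. ((inverse (1 - fps_X) :: 'a fps) ^ Suc a) $ i * (inverse (1 - fps_X) :: 'a fps) $ (p - i))"
    by (simp only: power_Suc2[of _ "Suc a"] fps_mult_nth)
  also have "\<dots> = (\<Sum>i\<le>p. of_nat ((a + i) choose i))"
    by (simp only: Suc.IH I_nth mult_1_right atLeast0AtMost)
  also have "\<dots> = of_nat (\<Sum>i\<le>p. (a + i) choose i)" by simp
  also have "\<dots> = of_nat ((Suc a + p) choose p)" by (simp add: sum_choose_lower)
  finally show ?case .
qed

lemma I_mult_one: "(1 - fps_X) * (inverse (1 - fps_X) :: 'a::field fps) = 1"
  by (simp add: inverse_mult_eq_1')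

lemma xdiv_eq: "(fps_xdiv :: 'a::field fps) = - (fps_X * inverse (1 - fps_X))"
proof -
  have "(fps_X - 1 :: 'a fps) = - (1 - fps_X)" by simp
  then show ?thesis unfolding fps_xdiv_def by (simp only: fps_inverse_minus) simp
qed

lemma xdiv_0: "(fps_xdiv :: 'a::field fps) $ 0 = 0"
  by (simp add: xdiv_eq)

lemma xdiv_1: "(fps_xdiv :: 'a::field fps) $ 1 = -1"
  by (simp add: xdiv_eq fps_mult_nth_1 I_nth)

lemma one_minus_xdiv: "1 - (fps_xdiv :: 'a::field fps) = inverse (1 - fps_X)"
proof -
  have "inverse (1 - fps_X) = 1 + fps_X * (inverse (1 - fps_X) :: 'a fps)"
    using I_mult_one[where 'a='a] by (simp add: algebra_simps)
  then show ?thesis by (simp add: xdiv_eq)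
qed

lemma xdiv_invol: "(fps_xdiv :: 'a::field fps) oo fps_xdiv = fps_X"
proof -
  let ?y = "fps_xdiv :: 'a fps" and ?I = "inverse (1 - fps_X) :: 'a fps"
  have a: "?I oo ?y = 1 - fps_X"
    by (simp add: fps_inverse_compose xdiv_0 fps_compose_sub_distrib one_minus_xdiv)
  have "?y oo ?y = - ((fps_X oo ?y) * (?I oo ?y))"
    by (simp add: xdiv_eq[of] fps_compose_uminus fps_compose_mult_distrib xdiv_0 del: fps_X_fps_compose_startby0)
  also have "\<dots> = - (?y * (1 - fps_X))" by (simp add: a xdiv_0)
  also have "\<dots> = fps_X * ((1 - fps_X) * ?I)" by (simp add: xdiv_eq algebra_simps)
  also have "\<dots> = fps_X" by (simp add: I_mult_one)
  finally show ?thesis .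
qed

definition eps :: "'a::field fps \<Rightarrow> nat \<Rightarrow> 'a fps" where
  "eps \<phi> r = (\<phi> oo fps_xdiv) - (1 - fps_X) ^ r * \<phi>"

lemma eps_invol:
  "eps \<phi> r oo fps_xdiv = - ((inverse (1 - fps_X)) ^ r * eps (\<phi>::'a::field fps) r)"
proof -
  let ?y = "fps_xdiv :: 'a fps" and ?I = "inverse (1 - fps_X) :: 'a fps"
  have "eps \<phi> r oo ?y = ((\<phi> oo ?y) oo ?y) - ((1 - fps_X) oo ?y) ^ r * (\<phi> oo ?y)"
    unfolding eps_def by (simp add: fps_compose_sub_distrib fps_compose_mult_distrib fps_compose_power[symmetric] xdiv_0)
  also have "(\<phi> oo ?y) oo ?y = \<phi>"
    by (simp add: fps_compose_assoc[symmetric] xdiv_0 xdiv_invol)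
  also have "(1 - fps_X) oo ?y = ?I"
    by (simp add: fps_compose_sub_distrib xdiv_0 one_minus_xdiv)
  also have "\<phi> - ?I ^ r * (\<phi> oo ?y) = - (?I ^ r * eps \<phi> r)"
  proof -
    have "?I ^ r * (1 - fps_X) ^ r = 1"
      by (metis I_mult_one mult.commute power_mult_distrib power_one)
    then show ?thesis unfolding eps_def by (simp add: algebra_simps)
  qed
  finally show ?thesis .
qed


lemma diff_step:
  fixes g :: "nat \<Rightarrow> 'a::comm_ring_1"
  shows "(\<Sum>l\<le>Suc n. (-1)^l * of_nat (Suc n choose l) * g l)
    = (\<Sum>l\<le>n. (-1)^l * of_nat (n choose l) * g l) - (\<Sum>l\<le>n. (-1)^l * of_nat (n choose l) * g (Suc l))"
proof -
  have "(\<Sum>l\<le>Suc n. (-1)^l * of_nat (Suc n choose l) * g l)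
      = g 0 + (\<Sum>l\<le>n. (-1)^(Suc l) * of_nat (Suc n choose Suc l) * g (Suc l))"
    by (subst sum.atMost_Suc_shift) (simp del: sum.atMost_Suc binomial_Suc_Suc)
  also have "\<dots> = g 0 + (\<Sum>l\<le>n. (-1)^(Suc l) * of_nat (n choose Suc l) * g (Suc l))
        - (\<Sum>l\<le>n. (-1)^l * of_nat (n choose l) * g (Suc l))"
  proof -
    have "\<And>l. (-1)^(Suc l) * of_nat (Suc n choose Suc l) * g (Suc l)
       = (-1)^(Suc l) * of_nat (n choose Suc l) * g (Suc l) - (-1)^l * of_nat (n choose l) * (g (Suc l) :: 'a)"
      by (simp add: algebra_simps)
    then show ?thesis by (simp only: sum_subtractf add_diff_eq)
  qed
  also have "g 0 + (\<Sum>l\<le>n. (-1)^(Suc l) * of_nat (n choose Suc l) * g (Suc l))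
      = (\<Sum>l\<le>Suc n. (-1)^l * of_nat (n choose l) * g l)"
    by (subst sum.atMost_Suc_shift) (simp del: sum.atMost_Suc)
  also have "\<dots> = (\<Sum>l\<le>n. (-1)^l * of_nat (n choose l) * g l)"
    by (simp add: binomial_eq_0)
  finally show ?thesis .
qed

lemma altsum:
  "n \<le> A \<Longrightarrow> (\<Sum>l\<le>n. (-1)^l * of_nat (n choose l) * (of_nat ((A - l) choose m) :: 'a::comm_ring_1))
      = (if n \<le> m then of_nat ((A - n) choose (m - n)) else 0)"
proof (induction n arbitrary: A)
  case 0
  then show ?case by simp
next
  case (Suc n)
  have e: "\<And>l. A - Suc l = (A - 1) - l" by simp
  have "(\<Sum>l\<le>Suc n. (-1)^l * of_nat (Suc n choose l) * (of_nat ((A - l) choose m) :: 'a))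
     = (if n \<le> m then of_nat ((A - n) choose (m - n)) else 0)
       - (if n \<le> m then of_nat ((A - 1 - n) choose (m - n)) else 0)"
    using Suc.IH[of A] Suc.IH[of "A - 1"] Suc.prems by (simp only: diff_step e)
  also have "\<dots> = (if Suc n \<le> m then of_nat ((A - Suc n) choose (m - Suc n)) else 0)"
  proof -
    { assume "Suc n \<le> m"
      then have "A - n = Suc (A - 1 - n)" "m - n = Suc (m - Suc n)" "A - 1 - n = A - Suc n" using Suc.prems by auto
      then have ?thesis using \<open>Suc n \<le> m\<close> by simp }
    then show ?thesis by (cases "n = m") auto
  qed
  finally show ?case .
qed



definition qc :: "nat \<Rightarrow> nat \<Rightarrow> nat \<Rightarrow> 'a::field" where
  "qc m k l = (-1)^l * of_nat ((2*m+2*k-1) choose l) * of_nat ((2*m-l) choose m)"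

definition QQ :: "nat \<Rightarrow> nat \<Rightarrow> 'a::field fps" where
  "QQ m k = Abs_fps (qc m k)"

lemma compose_mult_nth:
  fixes a b c :: "'a::field fps"
  assumes b0: "b $ 0 = 0"
  shows "((a oo b) * c) $ n = (\<Sum>j=0..n. a $ j * (b ^ j * c) $ n)"
proof -
  have z: "(b ^ j) $ i = 0" if "i < j" for i j
    using startsby_zero_power_prefix[OF b0] that by blast
  have c1: "(a oo b) $ i = (\<Sum>j=0..n. a $ j * (b ^ j) $ i)" if "i \<le> n" for i
    unfolding fps_compose_nth
    by (rule sum.mono_neutral_left) (use that z in auto)
  have "((a oo b) * c) $ n = (\<Sum>i=0..n. (\<Sum>j=0..n. a $ j * (b ^ j) $ i) * c $ (n - i))"
    unfolding fps_mult_nth by (rule sum.cong) (simp_all add: c1)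
  also have "\<dots> = (\<Sum>j=0..n. a $ j * (\<Sum>i=0..n. (b ^ j) $ i * c $ (n - i)))"
    unfolding sum_distrib_left sum_distrib_right mult.assoc by (rule sum.swap)
  also have "\<dots> = (\<Sum>j=0..n. a $ j * (b ^ j * c) $ n)"
    by (simp add: fps_mult_nth)
  finally show ?thesis .
qed

lemma neg1_pow_mult_nth: "(((-1) :: 'a::field fps) ^ j * F) $ n = (-1) ^ j * F $ n"
  by (cases "even j") simp_all

lemma xdiv_pow: "(fps_xdiv :: 'a::field fps) ^ j = (-1) ^ j * (fps_X ^ j * inverse (1 - fps_X) ^ j)"
  unfolding xdiv_eq by (rule trans[OF power_minus]) (simp add: power_mult_distrib)

lemma binom_id:
  fixes m k n :: nat
  assumes "n \<le> 2*m - 1" "m \<ge> 1"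
  shows "(\<Sum>l=0..n. qc m k l * of_nat ((2*k + (2*m - 1 - n)) + (n - l) choose (n - l)))
       = (-1) ^ n * (qc m k n :: 'a::field)"
proof -
  let ?N = "2*m+2*k-1"
  have "(\<Sum>l=0..n. qc m k l * of_nat ((2*k + (2*m - 1 - n)) + (n - l) choose (n - l)))
      = (\<Sum>l\<le>n. of_nat (?N choose n) * ((-1)^l * of_nat (n choose l) * (of_nat ((2*m - l) choose m) :: 'a)))"
  proof (rule sum.cong)
    fix l assume l: "l \<in> {..n}"
    have e: "(2*k + (2*m - 1 - n)) + (n - l) = ?N - l" using l assms by auto
    have cm: "(?N choose n) * (n choose l) = (?N choose l) * ((?N - l) choose (n - l))"
      by (rule choose_mult) (use l assms in auto)
    have "qc m k l * of_nat ((2*k + (2*m - 1 - n)) + (n - l) choose (n - l))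
       = (-1)^l * of_nat ((?N choose l) * ((?N - l) choose (n - l))) * (of_nat ((2*m-l) choose m) :: 'a)"
      unfolding qc_def e by (simp add: algebra_simps)
    also have "\<dots> = of_nat (?N choose n) * ((-1)^l * of_nat (n choose l) * (of_nat ((2*m - l) choose m) :: 'a))"
      unfolding cm[symmetric] by (simp add: algebra_simps)
    finally show "qc m k l * of_nat ((2*k + (2*m - 1 - n)) + (n - l) choose (n - l)) = \<dots>" .
  qed (simp add: atLeast0AtMost)
  also have "\<dots> = of_nat (?N choose n) * (if n \<le> m then of_nat ((2*m - n) choose (m - n)) else (0::'a))"
  proof -
    have alt: "(\<Sum>l\<le>n. (-1)^l * of_nat (n choose l) * (of_nat ((2*m - l) choose m) :: 'a))
       = (if n \<le> m then of_nat ((2*m - n) choose (m - n)) else 0)"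
      by (rule altsum) (use assms in simp)
    show ?thesis by (simp only: sum_distrib_left[symmetric] alt)
  qed
  also have "\<dots> = of_nat (?N choose n) * of_nat ((2*m - n) choose m)"
  proof (cases "n \<le> m")
    case True
    then show ?thesis by (simp add: binomial_symmetric[of m "2*m-n"])
  next
    case False
    have "(2*m-n) choose m = 0" by (rule binomial_eq_0) (use False assms in linarith)
    then show ?thesis using False by (simp only: of_nat_0 mult_0_right if_False)
  qed
  also have "\<dots> = (-1) ^ n * (qc m k n :: 'a)"
  proof -
    have "(-1::'a)^n * (-1)^n = 1" by (simp add: power_mult_distrib[symmetric])
    then show ?thesis unfolding qc_def by (metis (no_types, lifting) mult.assoc mult_1)
  qed
  finally show ?thesis .
qed



lemma term_id:
  fixes m k j :: nat
  assumes "m \<ge> 1" "j \<le> 2*m - 1"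
  shows "((fps_xdiv :: 'a::field fps) ^ j * (inverse (1 - fps_X) ^ (2*k+1) * QQ m k)) $ (2*m-1)
       = - qc m k (2*m - 1 - j)"
proof -
  let ?I = "inverse (1 - fps_X) :: 'a fps"
  let ?n = "2*m - 1 - j"
  have jj: "j = 2*m - 1 - ?n" using assms by simp
  have "(fps_xdiv :: 'a fps) ^ j * (?I ^ (2*k+1) * QQ m k)
      = (-1) ^ j * (fps_X ^ j * (QQ m k * ?I ^ Suc (2*k + j)))"
    by (simp add: xdiv_pow power_add[symmetric] algebra_simps)
  then have "((fps_xdiv :: 'a fps) ^ j * (?I ^ (2*k+1) * QQ m k)) $ (2*m-1)
      = (-1) ^ j * (QQ m k * ?I ^ Suc (2*k + j)) $ ?n"
    using assms by (simp only: neg1_pow_mult_nth fps_X_power_mult_nth) simp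
  also have "(QQ m k * ?I ^ Suc (2*k + j)) $ ?n
      = (\<Sum>l=0..?n. qc m k l * of_nat ((2*k + (2*m - 1 - ?n)) + (?n - l) choose (?n - l)))"
    unfolding fps_mult_nth I_pow_nth QQ_def fps_nth_Abs_fps jj[symmetric] by simp
  also have "\<dots> = (-1) ^ ?n * qc m k ?n"
    by (rule binom_id) (use assms in auto)
  also have "(-1) ^ j * ((-1) ^ ?n * qc m k ?n) = (-1) ^ (j + ?n) * (qc m k ?n :: 'a)"
    by (simp add: power_add)
  also have "j + ?n = Suc (2 * (m - 1))" using assms by simp
  finally show ?thesis by simp
qed

lemma key:
  fixes \<phi> :: "'a::field fps"
  assumes "m \<ge> 1"
  shows "((\<phi> oo fps_xdiv) * (inverse (1 - fps_X) ^ (2*k+1) * QQ m k)) $ (2*m-1)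
       = - (\<phi> * QQ m k) $ (2*m-1)"
proof -
  have "((\<phi> oo fps_xdiv) * (inverse (1 - fps_X) ^ (2*k+1) * QQ m k)) $ (2*m-1)
      = (\<Sum>j=0..2*m-1. \<phi> $ j * (- qc m k (2*m - 1 - j)))"
    unfolding compose_mult_nth[OF xdiv_0]
  proof (rule sum.cong)
    fix j assume "j \<in> {0..2*m-1}"
    then have "j \<le> 2*m-1" by simp
    show "\<phi> $ j * ((fps_xdiv ^ j * (inverse (1 - fps_X) ^ (2*k+1) * QQ m k)) $ (2*m-1))
        = \<phi> $ j * (- qc m k (2*m - 1 - j))"
      by (simp only: term_id[OF assms \<open>j \<le> 2*m-1\<close>])
  qed simp
  also have "\<dots> = - (\<phi> * QQ m k) $ (2*m-1)"
    by (simp add: fps_mult_nth QQ_def sum_negf)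
  finally show ?thesis .
qed



lemma S_eq:
  fixes \<phi> :: "'a::field fps"
  assumes "m \<ge> 1"
  shows "(\<phi> * QQ m k) $ (2*m-1) = (-1)^m * (\<Sum>i=0..m. (-1) ^ i * of_nat ((2*m + 2*k - 1) choose (m - i))
              * of_nat ((m + i) choose i) * \<phi> $ (m + i - 1))"
proof -
  have "(\<phi> * QQ m k) $ (2*m-1) = (\<Sum>a=0..2*m-1. \<phi> $ a * qc m k (2*m-1-a))"
    by (simp add: fps_mult_nth QQ_def)
  also have "\<dots> = (\<Sum>a=(m-1)..2*m-1. \<phi> $ a * qc m k (2*m-1-a))"
  proof (rule sum.mono_neutral_right)
    show "\<forall>a\<in>{0..2*m-1} - {m-1..2*m-1}. \<phi> $ a * qc m k (2*m-1-a) = 0"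
    proof
      fix a assume "a \<in> {0..2*m-1} - {m-1..2*m-1}"
      then have "a < m - 1" by auto
      then have "(2*m - (2*m-1-a)) choose m = 0" by (intro binomial_eq_0) linarith
      then have "(of_nat ((2*m - (2*m-1-a)) choose m) :: 'a) = 0" by (simp only: of_nat_0)
      then show "\<phi> $ a * qc m k (2*m-1-a) = 0" unfolding qc_def by (simp only: mult_zero_right)
    qed
  qed auto
  also have "\<dots> = (\<Sum>i=0..m. \<phi> $ (i + (m-1)) * qc m k (2*m-1-(i + (m-1))))"
  proof -
    have "{m-1..2*m-1} = {0+(m-1)..m+(m-1)}" using assms by auto
    then show ?thesis by (simp only: sum.shift_bounds_cl_nat_ivl)
  qed
  also have "\<dots> = (\<Sum>i=0..m. (-1)^m * ((-1) ^ i * of_nat ((2*m + 2*k - 1) choose (m - i))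
              * of_nat ((m + i) choose i) * \<phi> $ (m + i - 1)))"
  proof (rule sum.cong)
    fix i assume "i \<in> {0..m}"
    then have i: "i \<le> m" by simp
    have e1: "i + (m - 1) = m + i - 1" "2*m-1-(m + i - 1) = m - i" "2*m - (m-i) = m + i" using i assms by auto
    have "((-1::'a)^(m-i)) = (-1)^m * (-1)^i"
    proof -
      have "(-1::'a)^m = (-1)^(m-i) * (-1)^i" using i by (simp flip: power_add)
      then have "(-1::'a)^m * (-1)^i = (-1)^(m-i) * ((-1)^i * (-1)^i)" by (simp add: mult.assoc)
      also have "(-1::'a)^i * (-1)^i = 1" by (simp add: power_mult_distrib[symmetric])
      finally show ?thesis by simp
    qed
    moreover have "(m + i) choose m = (m + i) choose i"
      by (simp add: binomial_symmetric[of i "m+i"])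
    ultimately show "\<phi> $ (i + (m-1)) * qc m k (2*m-1-(i + (m-1))) = (-1)^m * ((-1) ^ i * of_nat ((2*m + 2*k - 1) choose (m - i))
              * of_nat ((m + i) choose i) * \<phi> $ (m + i - 1))"
      unfolding qc_def by (simp only: e1) (simp add: algebra_simps)
  qed simp
  also have "\<dots> = (-1)^m * (\<Sum>i=0..m. (-1) ^ i * of_nat ((2*m + 2*k - 1) choose (m - i))
              * of_nat ((m + i) choose i) * \<phi> $ (m + i - 1))"
    by (simp add: sum_distrib_left)
  finally show ?thesis .
qed

lemma eps_Q:
  fixes \<phi> :: "'a::field fps"
  assumes "m \<ge> 1"
  shows "(eps \<phi> (2*k+1) * (inverse (1 - fps_X) ^ (2*k+1) * QQ m k)) $ (2*m-1)
       = - 2 * (\<phi> * QQ m k) $ (2*m-1)"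
proof -
  let ?I = "inverse (1 - fps_X) :: 'a fps"
  have one: "(1 - fps_X) ^ (2*k+1) * ?I ^ (2*k+1) = 1"
    by (metis I_mult_one power_mult_distrib power_one)
  have "eps \<phi> (2*k+1) * (?I ^ (2*k+1) * QQ m k)
     = (\<phi> oo fps_xdiv) * (?I ^ (2*k+1) * QQ m k) - ((1 - fps_X) ^ (2*k+1) * ?I ^ (2*k+1)) * (\<phi> * QQ m k)"
    unfolding eps_def by (simp add: algebra_simps)
  also have "\<dots> = (\<phi> oo fps_xdiv) * (?I ^ (2*k+1) * QQ m k) - \<phi> * QQ m k"
    by (simp only: one mult_1)
  finally show ?thesis using key[OF assms, of \<phi> k] by simp
qed

lemma I0: "(inverse (1 - fps_X) ^ j :: 'a::field fps) $ 0 = 1"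
  by (induction j) simp_all

lemma first_nz_right:
  fixes a b :: "'a::field fps"
  assumes "\<forall>i<n. b $ i = 0"
  shows "(a * b) $ n = a $ 0 * b $ n"
proof -
  have "(a * b) $ n = (\<Sum>i=0..n. a $ i * b $ (n - i))" by (rule fps_mult_nth)
  also have "\<dots> = (\<Sum>i\<in>{0}. a $ i * b $ (n - i))"
    by (rule sum.mono_neutral_right) (use assms in auto)
  finally show ?thesis by simp
qed

lemma first_nz_left:
  fixes a b :: "'a::field fps"
  assumes "\<forall>i<n. b $ i = 0"
  shows "(b * a) $ n = b $ n * a $ 0"
  using first_nz_right[OF assms, of a] by (simp add: mult.commute)

lemma compose_first_nz:
  fixes e :: "'a::field fps"
  assumes "\<forall>i<n. e $ i = 0"
  shows "(e oo fps_xdiv) $ n = e $ n * (-1) ^ n"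
proof -
  have "(e oo fps_xdiv) $ n = (\<Sum>i=0..n. e $ i * (fps_xdiv ^ i) $ n)" by (rule fps_compose_nth)
  also have "\<dots> = (\<Sum>i\<in>{n}. e $ i * (fps_xdiv ^ i) $ n)"
    by (rule sum.mono_neutral_right) (use assms in auto)
  finally show ?thesis using xdiv_1[where 'a='a] by (simp add: startsby_zero_power_nth_same xdiv_0 del: One_nat_def)
qed

theorem lemma4p6:
  fixes \<phi> :: "'a::field_char_0 fps" and k :: nat
  assumes "k \<ge> 1"
  shows "(\<forall>m\<ge>1. (\<Sum>i=0..m. (-1) ^ i * of_nat ((2*m + 2*k - 1) choose (m - i))
              * of_nat ((m + i) choose i) * fps_nth \<phi> (m + i - 1)) = (0::'a))
         \<longleftrightarrow> \<phi> \<in> fps_F (2 * int k + 1)"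
proof -
  have F: "\<phi> \<in> fps_F (2 * int k + 1) \<longleftrightarrow> eps \<phi> (2*k+1) = 0"
  proof -
    have "nat (2 * int k + 1) = 2*k+1" by simp
    then have "one_minus_X_powi (2 * int k + 1) = (1 - fps_X :: 'a fps) ^ (2*k+1)"
      unfolding one_minus_X_powi_def by simp
    then show ?thesis unfolding fps_F_def eps_def by simp
  qed
  let ?S = "\<lambda>m. (\<Sum>i=0..m. (-1) ^ i * of_nat ((2*m + 2*k - 1) choose (m - i))
              * of_nat ((m + i) choose i) * \<phi> $ (m + i - 1)) :: 'a"
  have SQ: "?S m = 0 \<longleftrightarrow> (\<phi> * QQ m k) $ (2*m-1) = 0" if "m \<ge> 1" for m
    using S_eq[OF that, of \<phi> k] by simp
  show ?thesis
  proof
    assume H: "\<forall>m\<ge>1. ?S m = 0"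
    let ?e = "eps \<phi> (2*k+1)"
    have "\<forall>i<n. ?e $ i = 0" for n
    proof (induction n)
      case 0 then show ?case by simp
    next
      case (Suc n)
      have A: "(?e oo fps_xdiv) $ n = ?e $ n * (-1) ^ n"
        by (rule compose_first_nz) (use Suc in simp)
      have B: "(?e oo fps_xdiv) $ n = - ?e $ n"
        unfolding eps_invol using first_nz_right[of n ?e] Suc by (simp add: I0)
      have "?e $ n = 0"
      proof (cases "even n")
        case True
        then show ?thesis using A B by simp
      next
        case False
        define m where "m = (n + 1) div 2"
        have m1: "m \<ge> 1" and nm: "n = 2*m-1" using False by (auto simp: m_def elim!: oddE)
        have "(?e * (inverse (1 - fps_X) ^ (2*k+1) * QQ m k)) $ n
            = ?e $ n * (inverse (1 - fps_X) ^ (2*k+1) * QQ m k) $ 0"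
          by (rule first_nz_left) (use Suc in simp)
        moreover have "(?e * (inverse (1 - fps_X) ^ (2*k+1) * QQ m k)) $ n = 0"
          using eps_Q[OF m1, of \<phi> k] SQ[OF m1] H m1 nm by simp
        moreover have "(inverse (1 - fps_X) ^ (2*k+1) * QQ m k :: 'a fps) $ 0 \<noteq> 0"
          by (simp add: QQ_def qc_def)
        ultimately show ?thesis by simp
      qed
      then show ?case using Suc less_Suc_eq by auto
    qed
    then have "?e = 0" by (intro fps_ext) auto
    then show "\<phi> \<in> fps_F (2 * int k + 1)" using F by simp
  next
    assume "\<phi> \<in> fps_F (2 * int k + 1)"
    then have e0: "eps \<phi> (2*k+1) = 0" using F by simp
    show "\<forall>m\<ge>1. ?S m = 0"
    proof (intro allI impI)
      fix m :: nat assume m1: "m \<ge> 1"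
      have "- 2 * (\<phi> * QQ m k) $ (2*m-1) = 0"
        using eps_Q[OF m1, of \<phi> k] e0 by simp
      then show "?S m = 0" using SQ[OF m1] by simp
    qed
  qed
qed

end
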